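(* Let $Q$ be a QNP and $P=T_D(Q)$. A policy $\pi$ for $P$ is $P$-terminating if and only if the procedure Sieve reduces the policy graph $\mathcal{G}(P,\pi)$ to an acyclic graph.
   Context: A QNP is a tuple $Q=\langle F,V,I,O,G\rangle$ with finite sets $F$ of propositional variables and $V$ of numerical (non-negative real) variables; $I$, $G$ are sets of literals $p,\neg p$ ($p\in F$), $X=0$, $X>0$ ($X\in V$); each action $a\in O$ has a precondition (set of such literals), propositional effects (set of $F$-literals), and numerical effects $N(a)$ consisting of atoms $Inc(X)$, $Dec(X)$ (at most one per variable), with $X>0$ in the precondition whenever $Dec(X)\in N(a)$. The direct translation $T_D(Q)$ is the FOND problem over $F\cup\{p_{X=0}:X\in V\}$ obtained by reading $X=0$ as $p_{X=0}$ and $X>0$ as $\neg p_{X=0}$ in $I$, $G$, and preconditions, keeping propositional effects, replacing $Inc(X)$ by the deterministic effect $\neg p_{X=0}$ and $Dec(X)$ by the nondeterministic effect $\neg p_{X=0}\mid p_{X=0}$; it has a unique initial state (atoms not in $I$ are false). For a state $\bar s$ and action $a$ applicable in it, $F(a,\bar s)$ is the set of possible successors. A policy $\pi$ for $P$ is a partial map from states to actions; a $\pi$-trajectory is a sequence $\bar s_0,\bar s_1,\dots$ from the initial state with $\pi(\bar s_i)$ applicable and $\bar s_{i+1}\in F(\pi(\bar s_i),\bar s_i)$. An action of $P$ is a $Dec(X)$ (resp. $Inc(X)$) action if it comes from an action of $Q$ with $Dec(X)$ (resp. $Inc(X)$) in its numerical effects. An infinite $\pi$-trajectory is terminating if there is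 $X\in V$ such that $\pi(\bar s)$ is a $Dec(X)$ action for some state $\bar s$ occurring infinitely often in it and $\pi(\bar s')$ is not an $Inc(X)$ action for any state $\bar s'$ occurring infinitely often in it; $\pi$ is $P$-terminating iff every infinite $\pi$-trajectory is terminating. The policy graph $\mathcal{G}(P,\pi)$ has as nodes the states of $P$ reachable from the initial state by $\pi$-trajectories, and edges $(\bar s,\bar s')$ for $\bar s'\in F(\pi(\bar s),\bar s)$, labeled by $\pi(\bar s)$. The procedure Sieve on a graph $\mathcal G$ repeats: compute the strongly connected components (SCCs) of $\mathcal G$; choose an SCC $C$ and a variable $X\in V$ such that $\pi(\bar s)$ is a $Dec(X)$ action for some $\bar s\in C$ and $\pi(\bar s)$ is an $Inc(X)$ action for no $\bar s\in C$; remove all edges $(\bar s,\bar s')$ with $\bar s,\bar s'\in C$ and $\pi(\bar s)$ a $Dec(X)$ action; until $\mathcal G$ is acyclic or no such $C,X$ exist. *)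

theory Defs
  imports Main "HOL-Library.Infinite_Set"
begin

datatype ('f, 'v) qlit = Pos 'f | Neg 'f | EqZ 'v | GtZ 'v

text \<open>Numerical effect atoms Inc(X), Dec(X). A numerical effect of an action is a map
  'v => neff option, which enforces "at most one atom per variable".\<close>
datatype neff = Inc | Dec

text \<open>A QNP <F,V,I,O,G>. Actions are abstract names of type 'a, with precondition,
  propositional effects (a set of F-literals, (p,True) = p, (p,False) = not p) and
  numerical effects.\<close>
record ('f, 'v, 'a) qnp =
  qF   :: "'f set"
  qV   :: "'v set"
  qI   :: "('f, 'v) qlit set"
  qO   :: "'a set"
  qG   :: "('f, 'v) qlit set"
  qpre :: "'a \<Rightarrow> ('f, 'v) qlit set"
  qeff :: "'a \<Rightarrow> ('f \<times> bool) set"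
  qnum :: "'a \<Rightarrow> 'v \<Rightarrow> neff option"

definition lit_ok :: "('f, 'v, 'a) qnp \<Rightarrow> ('f, 'v) qlit \<Rightarrow> bool" where
  "lit_ok Q l = (case l of Pos p \<Rightarrow> p \<in> qF Q | Neg p \<Rightarrow> p \<in> qF Q
                          | EqZ X \<Rightarrow> X \<in> qV Q | GtZ X \<Rightarrow> X \<in> qV Q)"

definition qnp_wf :: "('f, 'v, 'a) qnp \<Rightarrow> bool" where
  "qnp_wf Q \<longleftrightarrow>
     finite (qF Q) \<and> finite (qV Q) \<and> finite (qO Q) \<and>
     (\<forall>l \<in> qI Q. lit_ok Q l) \<and> (\<forall>l \<in> qG Q. lit_ok Q l) \<and>
     (\<forall>a \<in> qO Q.
        (\<forall>l \<in> qpre Q a. lit_ok Q l) \<and>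
        (\<forall>(p, b) \<in> qeff Q a. p \<in> qF Q) \<and>
        (\<forall>X. qnum Q a X \<noteq> None \<longrightarrow> X \<in> qV Q) \<and>
        (\<forall>X. qnum Q a X = Some Dec \<longrightarrow> GtZ X \<in> qpre Q a))"

text \<open>Atoms of T_D(Q): the propositional variables of Q and one atom p_{X=0} per
  numerical variable X. A state is the set of atoms that are true.\<close>
datatype ('f, 'v) atom = Prop 'f | Zero 'v

type_synonym ('f, 'v) state = "('f, 'v) atom set"

record ('s, 'a) fond =
  f_atoms :: "'s"
  f_init  :: "'s"
  f_acts  :: "'a set"
  f_app   :: "'a \<Rightarrow> 's \<Rightarrow> bool"
  f_succ  :: "'a \<Rightarrow> 's \<Rightarrow> 's set"

definition holds :: "('f, 'v) state \<Rightarrow> ('f, 'v) qlit \<Rightarrow> bool" where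
  "holds s l = (case l of Pos p \<Rightarrow> Prop p \<in> s | Neg p \<Rightarrow> Prop p \<notin> s
                        | EqZ X \<Rightarrow> Zero X \<in> s | GtZ X \<Rightarrow> Zero X \<notin> s)"

definition TD :: "('f, 'v, 'a) qnp \<Rightarrow> (('f, 'v) state, 'a) fond" where
  "TD Q = \<lparr>
     f_atoms = Prop ` qF Q \<union> Zero ` qV Q,
     f_init = {Prop p | p. Pos p \<in> qI Q} \<union> {Zero X | X. EqZ X \<in> qI Q},
     f_acts = qO Q,
     f_app = (\<lambda>a s. a \<in> qO Q \<and> (\<forall>l \<in> qpre Q a. holds s l)),
     f_succ = (\<lambda>a s.
        let s1 = (s - {Prop p | p. (p, False) \<in> qeff Q a}) \<union> {Prop p | p. (p, True) \<in> qeff Q a};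
            incs = {X. qnum Q a X = Some Inc};
            decs = {X. qnum Q a X = Some Dec}
        in {(s1 - Zero ` (incs \<union> decs)) \<union> Zero ` Z | Z. Z \<subseteq> decs}) \<rparr>"

definition is_state :: "(('f, 'v) state, 'a) fond \<Rightarrow> ('f, 'v) state \<Rightarrow> bool" where
  "is_state P s \<longleftrightarrow> s \<subseteq> f_atoms P"

type_synonym ('f, 'v, 'a) policy = "('f, 'v) state \<Rightarrow> 'a option"

definition is_policy :: "(('f, 'v) state, 'a) fond \<Rightarrow> ('f, 'v, 'a) policy \<Rightarrow> bool" where
  "is_policy P \<pi> \<longleftrightarrow> (\<forall>s a. \<pi> s = Some a \<longrightarrow> is_state P s \<and> a \<in> f_acts P)"

definition pi_step :: "(('f, 'v) state, 'a) fond \<Rightarrow> ('f, 'v, 'a) policy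
                        \<Rightarrow> ('f, 'v) state \<Rightarrow> ('f, 'v) state \<Rightarrow> bool" where
  "pi_step P \<pi> s s' \<longleftrightarrow> (\<exists>a. \<pi> s = Some a \<and> f_app P a s \<and> s' \<in> f_succ P a s)"

definition infinite_traj :: "(('f, 'v) state, 'a) fond \<Rightarrow> ('f, 'v, 'a) policy
                              \<Rightarrow> (nat \<Rightarrow> ('f, 'v) state) \<Rightarrow> bool" where
  "infinite_traj P \<pi> t \<longleftrightarrow> t 0 = f_init P \<and> (\<forall>i. pi_step P \<pi> (t i) (t (Suc i)))"

definition dec_at :: "('f, 'v, 'a) qnp \<Rightarrow> ('f, 'v, 'a) policy \<Rightarrow> ('f, 'v) state \<Rightarrow> 'v \<Rightarrow> bool" where
  "dec_at Q \<pi> s X \<longleftrightarrow> (\<exists>a. \<pi> s = Some a \<and> qnum Q a X = Some Dec)"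

definition inc_at :: "('f, 'v, 'a) qnp \<Rightarrow> ('f, 'v, 'a) policy \<Rightarrow> ('f, 'v) state \<Rightarrow> 'v \<Rightarrow> bool" where
  "inc_at Q \<pi> s X \<longleftrightarrow> (\<exists>a. \<pi> s = Some a \<and> qnum Q a X = Some Inc)"

definition terminating_traj :: "('f, 'v, 'a) qnp \<Rightarrow> ('f, 'v, 'a) policy
                                 \<Rightarrow> (nat \<Rightarrow> ('f, 'v) state) \<Rightarrow> bool" where
  "terminating_traj Q \<pi> t \<longleftrightarrow>
     (\<exists>X \<in> qV Q. (\<exists>s. (\<exists>\<^sub>\<infinity>i. t i = s) \<and> dec_at Q \<pi> s X) \<and>
                 (\<forall>s'. (\<exists>\<^sub>\<infinity>i. t i = s') \<longrightarrow> \<not> inc_at Q \<pi> s' X))"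

definition P_terminating :: "('f, 'v, 'a) qnp \<Rightarrow> ('f, 'v, 'a) policy \<Rightarrow> bool" where
  "P_terminating Q \<pi> \<longleftrightarrow>
     (\<forall>t. infinite_traj (TD Q) \<pi> t \<longrightarrow> terminating_traj Q \<pi> t)"

definition pg_nodes :: "(('f, 'v) state, 'a) fond \<Rightarrow> ('f, 'v, 'a) policy \<Rightarrow> ('f, 'v) state set" where
  "pg_nodes P \<pi> = {s. (pi_step P \<pi>)\<^sup>*\<^sup>* (f_init P) s}"

definition pg_edges :: "(('f, 'v) state, 'a) fond \<Rightarrow> ('f, 'v, 'a) policy
                         \<Rightarrow> (('f, 'v) state \<times> ('f, 'v) state) set" where
  "pg_edges P \<pi> = {(s, s'). s \<in> pg_nodes P \<pi> \<and> pi_step P \<pi> s s'}"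

text \<open>Trivial SCCs (single nodes without self-loop) have no internal edges, so choosing them in
  Sieve would remove nothing; they are excluded so that every Sieve iteration is meaningful.\<close>
definition is_scc :: "('s \<times> 's) set \<Rightarrow> 's set \<Rightarrow> bool" where
  "is_scc E C \<longleftrightarrow>
     (\<exists>x \<in> C. \<exists>y \<in> C. (x, y) \<in> E) \<and>
     (\<forall>x \<in> C. \<forall>y \<in> C. (x, y) \<in> E\<^sup>*) \<and>
     (\<forall>x \<in> C. \<forall>y. (x, y) \<in> E\<^sup>* \<and> (y, x) \<in> E\<^sup>* \<longrightarrow> y \<in> C)"

definition sieve_step :: "('f, 'v, 'a) qnp \<Rightarrow> ('f, 'v, 'a) policy
     \<Rightarrow> (('f, 'v) state \<times> ('f, 'v) state) set \<Rightarrow> (('f, 'v) state \<times> ('f, 'v) state) set \<Rightarrow> bool" where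
  "sieve_step Q \<pi> E E' \<longleftrightarrow>
     (\<exists>C X. is_scc E C \<and> X \<in> qV Q \<and>
            (\<exists>s \<in> C. dec_at Q \<pi> s X) \<and> (\<forall>s \<in> C. \<not> inc_at Q \<pi> s X) \<and>
            E' = E - {(s, s'). s \<in> C \<and> s' \<in> C \<and> dec_at Q \<pi> s X})"

definition sieve_result :: "('f, 'v, 'a) qnp \<Rightarrow> ('f, 'v, 'a) policy
     \<Rightarrow> (('f, 'v) state \<times> ('f, 'v) state) set \<Rightarrow> (('f, 'v) state \<times> ('f, 'v) state) set \<Rightarrow> bool" where
  "sieve_result Q \<pi> E0 E \<longleftrightarrow>
     (\<lambda>A B. \<not> acyclic A \<and> sieve_step Q \<pi> A B)\<^sup>*\<^sup>* E0 E \<and>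
     (acyclic E \<or> \<not> (\<exists>E'. sieve_step Q \<pi> E E'))"

definition sieve_succeeds :: "('f, 'v, 'a) qnp \<Rightarrow> ('f, 'v, 'a) policy \<Rightarrow> bool" where
  "sieve_succeeds Q \<pi> \<longleftrightarrow>
     (\<forall>E. sieve_result Q \<pi> (pg_edges (TD Q) \<pi>) E \<longrightarrow> acyclic E)"

end

theory Submission
  imports Defs
begin

lemma succ_sub_atoms:
  assumes wf: "qnp_wf Q" and s: "s \<subseteq> f_atoms (TD Q)" and st: "pi_step (TD Q) \<pi> s s'"
  shows "s' \<subseteq> f_atoms (TD Q)"
proof -
  obtain a where a: "\<pi> s = Some a" "f_app (TD Q) a s" "s' \<in> f_succ (TD Q) a s"
    using st unfolding pi_step_def by blast
  have aO: "a \<in> qO Q" using a(2) by (simp add: TD_def)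
  have eff: "\<And>p b. (p, b) \<in> qeff Q a \<Longrightarrow> p \<in> qF Q"
    using wf aO unfolding qnp_wf_def by fastforce
  have num: "\<And>X. qnum Q a X = Some Dec \<Longrightarrow> X \<in> qV Q"
    using wf aO unfolding qnp_wf_def by fastforce
  show ?thesis using a(3) s eff num by (auto simp: TD_def Let_def)
qed

lemma init_sub_atoms:
  assumes wf: "qnp_wf Q"
  shows "f_init (TD Q) \<subseteq> f_atoms (TD Q)"
  using wf unfolding qnp_wf_def lit_ok_def by (fastforce simp: TD_def)

lemma reach_sub_atoms:
  assumes wf: "qnp_wf Q"
  shows "(pi_step (TD Q) \<pi>)\<^sup>*\<^sup>* (f_init (TD Q)) s \<Longrightarrow> s \<subseteq> f_atoms (TD Q)"
proof (induction rule: rtranclp_induct)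
  case base then show ?case using init_sub_atoms[OF wf] .
next
  case (step y z) then show ?case using succ_sub_atoms[OF wf] by blast
qed

lemma finite_nodes:
  assumes wf: "qnp_wf Q"
  shows "finite (pg_nodes (TD Q) \<pi>)"
proof -
  have "finite (f_atoms (TD Q))" using wf by (simp add: TD_def qnp_wf_def)
  moreover have "pg_nodes (TD Q) \<pi> \<subseteq> Pow (f_atoms (TD Q))"
    using reach_sub_atoms[OF wf] unfolding pg_nodes_def by blast
  ultimately show ?thesis by (meson finite_Pow_iff finite_subset)
qed

lemma edges_sub: "pg_edges P \<pi> \<subseteq> pg_nodes P \<pi> \<times> pg_nodes P \<pi>"
  unfolding pg_edges_def pg_nodes_def by auto

lemma finite_edges:
  assumes wf: "qnp_wf Q"
  shows "finite (pg_edges (TD Q) \<pi>)"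
  by (rule finite_subset[OF edges_sub]) (simp add: finite_nodes[OF wf])

lemma scc_closed: "is_scc E C \<Longrightarrow> x \<in> C \<Longrightarrow> (x, y) \<in> E\<^sup>* \<Longrightarrow> (y, x) \<in> E\<^sup>* \<Longrightarrow> y \<in> C"
  unfolding is_scc_def by blast

lemma scc_reach: "is_scc E C \<Longrightarrow> x \<in> C \<Longrightarrow> y \<in> C \<Longrightarrow> (x, y) \<in> E\<^sup>*"
  unfolding is_scc_def by blast

lemma scc_edge_from:
  assumes sc: "is_scc E C" and s: "s \<in> C"
  shows "\<exists>s' \<in> C. (s, s') \<in> E"
proof -
  obtain x y where xy: "x \<in> C" "y \<in> C" "(x, y) \<in> E" using sc unfolding is_scc_def by blast
  have sx: "(s, x) \<in> E\<^sup>*" using sc s xy unfolding is_scc_def by blast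
  show ?thesis
  proof (cases "s = x")
    case True then show ?thesis using xy by blast
  next
    case False
    then have "(s, x) \<in> E\<^sup>+" using sx by (meson rtranclD)
    then obtain z where z: "(s, z) \<in> E" "(z, x) \<in> E\<^sup>*" by (meson tranclD)
    have "(x, s) \<in> E\<^sup>*" using sc s xy unfolding is_scc_def by blast
    then have "(z, s) \<in> E\<^sup>*" using z(2) by (meson rtrancl_trans)
    then have "z \<in> C" using scc_closed[OF sc s] z(1) by blast
    then show ?thesis using z(1) by blast
  qed
qed

lemma sieve_step_sub:
  assumes "sieve_step Q \<pi> E E'"
  shows "E' \<subset> E"
proof -
  obtain C X where CX: "is_scc E C" "\<exists>s \<in> C. dec_at Q \<pi> s X"
    "E' = E - {(s, s'). s \<in> C \<and> s' \<in> C \<and> dec_at Q \<pi> s X}"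
    using assms unfolding sieve_step_def by blast
  obtain s where s: "s \<in> C" "dec_at Q \<pi> s X" using CX by blast
  obtain s' where "s' \<in> C" "(s, s') \<in> E" using scc_edge_from[OF CX(1) s(1)] by blast
  then show ?thesis using CX(3) s by blast
qed

lemma sieve_exists:
  assumes "finite E"
  shows "\<exists>E'. (\<lambda>A B. \<not> acyclic A \<and> sieve_step Q \<pi> A B)\<^sup>*\<^sup>* E E' \<and>
     (acyclic E' \<or> \<not> (\<exists>E''. sieve_step Q \<pi> E' E''))"
  using assms
proof (induction rule: finite_psubset_induct)
  case (psubset A)
  show ?case
  proof (cases "acyclic A \<or> \<not> (\<exists>E''. sieve_step Q \<pi> A E'')")
    case True then show ?thesis by blast
  next
    case False
    then obtain B where B: "sieve_step Q \<pi> A B" "\<not> acyclic A" by blast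
    then have "B \<subset> A" using sieve_step_sub by blast
    then obtain E' where E': "(\<lambda>A B. \<not> acyclic A \<and> sieve_step Q \<pi> A B)\<^sup>*\<^sup>* B E'"
      "acyclic E' \<or> \<not> (\<exists>E''. sieve_step Q \<pi> E' E'')" using psubset.IH by blast
    have "(\<lambda>A B. \<not> acyclic A \<and> sieve_step Q \<pi> A B)\<^sup>*\<^sup>* A E'"
      apply (rule converse_rtranclp_into_rtranclp[of _ A B])
      using B E'(1) by auto
    then show ?thesis using E'(2) by blast
  qed
qed

lemma seq_path:
  assumes "\<forall>k. i \<le> k \<and> k < j \<longrightarrow> (t k, t (Suc k)) \<in> R" and "i \<le> j"
  shows "(t i, t j) \<in> R\<^sup>*"
  using assms
proof (induction j)
  case 0 then show ?case by simp
next
  case (Suc j)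
  show ?case
  proof (cases "i = Suc j")
    case True then show ?thesis by simp
  next
    case False
    then have "i \<le> j" using Suc.prems by simp
    then have "(t i, t j) \<in> R\<^sup>*" using Suc by simp
    moreover have "(t j, t (Suc j)) \<in> R" using Suc.prems \<open>i \<le> j\<close> by simp
    ultimately show ?thesis by (meson rtrancl_into_rtrancl)
  qed
qed

lemma eventually_Einf:
  assumes fin: "finite (range t)"
  shows "\<exists>N. \<forall>i>N. (\<exists>\<^sub>\<infinity>j. t j = t i \<and> t (Suc j) = t (Suc i))"
proof -
  define Pairs where "Pairs = (\<lambda>i. (t i, t (Suc i))) ` UNIV"
  have "Pairs \<subseteq> range t \<times> range t" unfolding Pairs_def by auto
  then have finP: "finite Pairs" using fin by (meson finite_SigmaI finite_subset)
  define B where "B = {p \<in> Pairs. \<not> (\<exists>\<^sub>\<infinity>j. (t j, t (Suc j)) = p)}"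
  have "B \<subseteq> Pairs" unfolding B_def by blast
  then have finB: "finite B" using finP by (rule finite_subset)
  have h: "\<forall>p\<in>B. \<forall>\<^sub>\<infinity>j. (t j, t (Suc j)) \<noteq> p"
  proof
    fix p assume "p \<in> B"
    then have "\<not> (\<exists>\<^sub>\<infinity>j. (t j, t (Suc j)) = p)" unfolding B_def by blast
    then show "\<forall>\<^sub>\<infinity>j. (t j, t (Suc j)) \<noteq> p" by (simp only: not_INFM)
  qed
  have "\<forall>\<^sub>\<infinity>j. \<forall>p\<in>B. (t j, t (Suc j)) \<noteq> p"
    by (rule eventually_ball_finite[OF finB h])
  then obtain m where m: "\<forall>j>m. \<forall>p\<in>B. (t j, t (Suc j)) \<noteq> p" unfolding MOST_nat by blast
  have "\<forall>i>m. (\<exists>\<^sub>\<infinity>j. t j = t i \<and> t (Suc j) = t (Suc i))"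
  proof (intro allI impI)
    fix i assume "i > m"
    show "\<exists>\<^sub>\<infinity>j. t j = t i \<and> t (Suc j) = t (Suc i)"
    proof (rule ccontr)
      assume "\<not> ?thesis"
      then have "\<not> (\<exists>\<^sub>\<infinity>j. (t j, t (Suc j)) = (t i, t (Suc i)))" by simp
      moreover have "(t i, t (Suc i)) \<in> Pairs" unfolding Pairs_def by blast
      ultimately have "(t i, t (Suc i)) \<in> B" unfolding B_def by blast
      then show False using m \<open>i > m\<close> by blast
    qed
  qed
  then show ?thesis by blast
qed


definition walk :: "('s \<times> 's) set \<Rightarrow> (nat \<Rightarrow> 's) \<Rightarrow> nat \<Rightarrow> bool" where
  "walk E f n \<longleftrightarrow> (\<forall>i<n. (f i, f (Suc i)) \<in> E)"

lemma rtrancl_walk: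
  "(x, y) \<in> E\<^sup>* \<Longrightarrow> \<exists>f n. f 0 = x \<and> f n = y \<and> walk E f n"
proof (induction rule: rtrancl_induct)
  case base
  show ?case by (rule exI[of _ "\<lambda>_. x"], rule exI[of _ 0]) (simp add: walk_def)
next
  case (step y z)
  then obtain f n where f: "f 0 = x" "f n = y" "walk E f n" by blast
  show ?case
    apply (rule exI[of _ "f(Suc n := z)"], rule exI[of _ "Suc n"])
    using f step(2) by (auto simp: walk_def less_Suc_eq)
qed

lemma rtranclp_walk:
  "r\<^sup>*\<^sup>* x y \<Longrightarrow> \<exists>f n. f 0 = x \<and> f n = y \<and> walk {(a, b). r a b} f n"
proof (induction rule: rtranclp_induct)
  case base
  show ?case by (rule exI[of _ "\<lambda>_. x"], rule exI[of _ 0]) (simp add: walk_def)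
next
  case (step y z)
  then obtain f n where f: "f 0 = x" "f n = y" "walk {(a, b). r a b} f n" by blast
  show ?case
    apply (rule exI[of _ "f(Suc n := z)"], rule exI[of _ "Suc n"])
    using f step(2) by (auto simp: walk_def less_Suc_eq)
qed

lemma walk_concat:
  assumes "walk E f n" "walk E g m" "f n = g 0"
  shows "walk E (\<lambda>i. if i \<le> n then f i else g (i - n)) (n + m)"
  unfolding walk_def
proof (intro allI impI)
  fix i assume i: "i < n + m"
  show "((if i \<le> n then f i else g (i - n)), (if Suc i \<le> n then f (Suc i) else g (Suc i - n))) \<in> E"
  proof (cases "i < n")
    case True then show ?thesis using assms(1) by (simp add: walk_def)
  next
    case False
    then have "i - n < m" "Suc i - n = Suc (i - n)" using i by auto
    moreover have "(if i \<le> n then f i else g (i - n)) = g (i - n)"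
      using False assms(3) by auto
    ultimately show ?thesis using assms(2) False by (simp add: walk_def)
  qed
qed

lemma walk_rtrancl:
  assumes "walk E f n" "i \<le> j" "j \<le> n"
  shows "(f i, f j) \<in> E\<^sup>*"
  by (rule seq_path) (use assms in \<open>auto simp: walk_def\<close>)

lemma cover_aux:
  assumes fin: "finite A" and sc: "is_scc E C" and c: "c \<in> C"
  shows "A \<subseteq> C \<Longrightarrow> \<exists>f n. n > 0 \<and> f 0 = c \<and> f n = c \<and> walk E f n \<and> A \<subseteq> f ` {..<n}"
  using fin
proof (induction rule: finite_induct)
  case empty
  obtain d where d: "d \<in> C" "(c, d) \<in> E" using scc_edge_from[OF sc c] by blast
  have dc: "(d, c) \<in> E\<^sup>*" using scc_reach[OF sc d(1) c] .
  obtain g m where g: "g 0 = d" "g m = c" "walk E g m" using rtrancl_walk[OF dc] by blast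
  define f where "f = (\<lambda>i. if i = 0 then c else g (i - 1))"
  have fw: "walk E f (Suc m)" unfolding walk_def
  proof (intro allI impI)
    fix i assume i: "i < Suc m"
    show "(f i, f (Suc i)) \<in> E"
    proof (cases i)
      case 0 then show ?thesis using d g unfolding f_def by simp
    next
      case (Suc k) then show ?thesis using g(3) i unfolding f_def walk_def by simp
    qed
  qed
  have "f 0 = c" "f (Suc m) = c" using g unfolding f_def by auto
  then show ?case using fw by (intro exI[of _ f] exI[of _ "Suc m"]) simp
next
  case (insert a A)
  then obtain f n where f: "n > 0" "f 0 = c" "f n = c" "walk E f n" "A \<subseteq> f ` {..<n}" by blast
  have a: "a \<in> C" using insert by blast
  have "(c, a) \<in> E\<^sup>*" "(a, c) \<in> E\<^sup>*" using scc_reach[OF sc] a c by blast+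
  obtain g1 m1 where g1: "g1 0 = c" "g1 m1 = a" "walk E g1 m1"
    using rtrancl_walk[OF \<open>(c, a) \<in> E\<^sup>*\<close>] by blast
  obtain g2 m2 where g2: "g2 0 = a" "g2 m2 = c" "walk E g2 m2"
    using rtrancl_walk[OF \<open>(a, c) \<in> E\<^sup>*\<close>] by blast
  define h1 where "h1 = (\<lambda>i. if i \<le> m1 then g1 i else g2 (i - m1))"
  have h1: "walk E h1 (m1 + m2)" unfolding h1_def by (rule walk_concat) (use g1 g2 in auto)
  have h10: "h1 0 = c" "h1 (m1 + m2) = c" "h1 m1 = a" using g1 g2 unfolding h1_def by auto
  define h where "h = (\<lambda>i. if i \<le> n then f i else h1 (i - n))"
  have hw: "walk E h (n + (m1 + m2))" unfolding h_def by (rule walk_concat) (use f h10 h1 in auto)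
  have hc: "h 0 = c" "h (n + (m1 + m2)) = c" using f h10 unfolding h_def by auto
  have "A \<subseteq> h ` {..<n + (m1 + m2)}"
  proof
    fix x assume "x \<in> A"
    then obtain i where "i < n" "x = f i" using f(5) by blast
    then show "x \<in> h ` {..<n + (m1 + m2)}" unfolding h_def
      by (intro image_eqI[of _ _ i]) auto
  qed
  moreover have "a \<in> h ` {..<n + (m1 + m2)}"
  proof (cases "m2 = 0")
    case True
    then have "a = c" using g2 by simp
    then show ?thesis using hc f(1) by (intro image_eqI[of _ _ 0]) auto
  next
    case False
    have "h (n + m1) = a" using h10 f(3) unfolding h_def by auto
    then show ?thesis using False by (intro image_eqI[of _ _ "n + m1"]) auto
  qed
  ultimately show ?case using hw hc f(1)
    by (intro exI[of _ h] exI[of _ "n + (m1 + m2)"]) auto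
qed

lemma lasso:
  assumes g: "walk R g m" and f: "walk R f n" and gm: "g m = f 0" and fn: "f n = f 0"
    and n: "n > 0"
    and t: "t = (\<lambda>i. if i < m then g i else f ((i - m) mod n))"
  shows "\<forall>i. (t i, t (Suc i)) \<in> R" "t 0 = g 0" "{s. \<exists>\<^sub>\<infinity>i. t i = s} = f ` {..<n}"
proof -
  show "\<forall>i. (t i, t (Suc i)) \<in> R"
  proof
    fix i
    show "(t i, t (Suc i)) \<in> R"
    proof (cases "Suc i < m")
      case True then show ?thesis using g t by (simp add: walk_def)
    next
      case F1: False
      show ?thesis
      proof (cases "Suc i = m")
        case True
        then have "t i = g i" "t (Suc i) = f 0" using t by auto
        then show ?thesis using g gm True by (auto simp: walk_def)
      next
        case False
        then have im: "i \<ge> m" using F1 by simp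
        define k where "k = (i - m) mod n"
        have kn: "k < n" using n unfolding k_def by simp
        have ti: "t i = f k" using t im unfolding k_def by simp
        have "Suc i - m = Suc (i - m)" using im by simp
        then have ts: "t (Suc i) = f (if Suc k = n then 0 else Suc k)"
          using t im unfolding k_def by (simp add: mod_Suc)
        show ?thesis
        proof (cases "Suc k = n")
          case True
          then show ?thesis using ti ts f fn kn by (auto simp: walk_def)
        next
          case False
          then show ?thesis using ti ts f kn by (auto simp: walk_def)
        qed
      qed
    qed
  qed
  show "t 0 = g 0" using t gm by (cases "m = 0") auto
  show "{s. \<exists>\<^sub>\<infinity>i. t i = s} = f ` {..<n}"
  proof
    show "{s. \<exists>\<^sub>\<infinity>i. t i = s} \<subseteq> f ` {..<n}"
    proof
      fix s assume "s \<in> {s. \<exists>\<^sub>\<infinity>i. t i = s}"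
      then obtain i where "i > m" "t i = s" unfolding INFM_nat by blast
      then have "s = f ((i - m) mod n)" using t by simp
      then show "s \<in> f ` {..<n}" using n by auto
    qed
  next
    show "f ` {..<n} \<subseteq> {s. \<exists>\<^sub>\<infinity>i. t i = s}"
    proof
      fix s assume "s \<in> f ` {..<n}"
      then obtain j where j: "j < n" "s = f j" by blast
      have "\<forall>M. \<exists>i>M. t i = s"
      proof
        fix M
        define i where "i = m + j + (M + 1) * n"
        have "(M + 1) * n \<ge> M + 1" using n mult_le_mono2[of 1 n "M + 1"] by simp
        then have "i > M" unfolding i_def by simp
        moreover have "(i - m) mod n = j" unfolding i_def using j(1) by (simp add: mod_add_eq[symmetric])
        moreover have "\<not> i < m" unfolding i_def by simp
        ultimately show "\<exists>i>M. t i = s" using t j by auto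
      qed
      then show "s \<in> {s. \<exists>\<^sub>\<infinity>i. t i = s}" unfolding INFM_nat by blast
    qed
  qed
qed


lemma sieve_run_sub:
  "(\<lambda>A B. \<not> acyclic A \<and> sieve_step Q \<pi> A B)\<^sup>*\<^sup>* E0 E \<Longrightarrow> E \<subseteq> E0"
  by (induction rule: rtranclp_induct) (auto dest: sieve_step_sub)

lemma dir1:
  assumes wf: "qnp_wf Q" and PT: "P_terminating Q \<pi>"
  shows "sieve_succeeds Q \<pi>"
  unfolding sieve_succeeds_def
proof (intro allI impI)
  fix E assume res: "sieve_result Q \<pi> (pg_edges (TD Q) \<pi>) E"
  show "acyclic E"
  proof (rule ccontr)
    assume cyc: "\<not> acyclic E"
    then have nostep: "\<not> (\<exists>E'. sieve_step Q \<pi> E E')" using res unfolding sieve_result_def by blast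
    have Esub: "E \<subseteq> pg_edges (TD Q) \<pi>" using res sieve_run_sub unfolding sieve_result_def by blast
    obtain x where x: "(x, x) \<in> E\<^sup>+" using cyc unfolding acyclic_def by blast
    define C where "C = {y. (x, y) \<in> E\<^sup>* \<and> (y, x) \<in> E\<^sup>*}"
    have xC: "x \<in> C" unfolding C_def by simp
    have sc: "is_scc E C"
    proof -
      obtain y where y: "(x, y) \<in> E" "(y, x) \<in> E\<^sup>*" using x by (meson tranclD)
      have "y \<in> C" using y unfolding C_def by auto
      moreover have "\<forall>a\<in>C. \<forall>b\<in>C. (a, b) \<in> E\<^sup>*"
      proof (intro ballI)
        fix a b assume "a \<in> C" "b \<in> C"
        then have "(a, x) \<in> E\<^sup>*" "(x, b) \<in> E\<^sup>*" unfolding C_def by simp_all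
        then show "(a, b) \<in> E\<^sup>*" by (rule rtrancl_trans)
      qed
      moreover have "\<forall>a\<in>C. \<forall>b. (a, b) \<in> E\<^sup>* \<and> (b, a) \<in> E\<^sup>* \<longrightarrow> b \<in> C"
      proof (intro ballI allI impI)
        fix a b assume "a \<in> C" "(a, b) \<in> E\<^sup>* \<and> (b, a) \<in> E\<^sup>*"
        then have "(x, a) \<in> E\<^sup>*" "(a, x) \<in> E\<^sup>*" "(a, b) \<in> E\<^sup>*" "(b, a) \<in> E\<^sup>*"
          unfolding C_def by simp_all
        then have "(x, b) \<in> E\<^sup>*" "(b, x) \<in> E\<^sup>*" using rtrancl_trans by fast+
        then show "b \<in> C" unfolding C_def by simp
      qed
      ultimately show ?thesis unfolding is_scc_def using xC y(1) by blast
    qed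
    have finE: "finite E" using Esub finite_edges[OF wf] finite_subset by blast
    have finC: "finite C"
    proof -
      have "C \<subseteq> insert x (fst ` E)"
      proof
        fix y assume "y \<in> C"
        then have "(y, x) \<in> E\<^sup>*" unfolding C_def by simp
        then show "y \<in> insert x (fst ` E)"
          by (cases rule: converse_rtranclE) force+
      qed
      then show ?thesis using finE finite_subset by blast
    qed
    have cond: "\<forall>X\<in>qV Q. (\<exists>s\<in>C. dec_at Q \<pi> s X) \<longrightarrow> (\<exists>s\<in>C. inc_at Q \<pi> s X)"
    proof (intro ballI impI, rule ccontr)
      fix X assume "X \<in> qV Q" "\<exists>s\<in>C. dec_at Q \<pi> s X" "\<not> (\<exists>s\<in>C. inc_at Q \<pi> s X)"
      then have "sieve_step Q \<pi> E (E - {(s, s'). s \<in> C \<and> s' \<in> C \<and> dec_at Q \<pi> s X})"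
        unfolding sieve_step_def using sc by blast
      then show False using nostep by blast
    qed
    obtain f n where f: "n > 0" "f 0 = x" "f n = x" "walk E f n" "C \<subseteq> f ` {..<n}"
      using cover_aux[OF finC sc xC] by blast
    have fC: "f ` {..<n} \<subseteq> C"
    proof
      fix s assume "s \<in> f ` {..<n}"
      then obtain i where i: "i < n" "s = f i" by blast
      have "(f 0, f i) \<in> E\<^sup>*" "(f i, f n) \<in> E\<^sup>*" using walk_rtrancl[OF f(4)] i by auto
      then show "s \<in> C" using i f unfolding C_def by auto
    qed
    have "\<exists>z. (x, z) \<in> E" using x by (meson tranclD)
    then have xnode: "x \<in> pg_nodes (TD Q) \<pi>" using Esub unfolding pg_edges_def by blast
    then have xr: "(pi_step (TD Q) \<pi>)\<^sup>*\<^sup>* (f_init (TD Q)) x" unfolding pg_nodes_def by simp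
    obtain g m where g: "g 0 = f_init (TD Q)" "g m = x" "walk {(a,b). pi_step (TD Q) \<pi> a b} g m"
      using rtranclp_walk[OF xr] by blast
    have fw: "walk {(a,b). pi_step (TD Q) \<pi> a b} f n"
      using f(4) Esub unfolding walk_def pg_edges_def by blast
    have gm: "g m = f 0" and fn: "f n = f 0" using g f by auto
    define t where "t = (\<lambda>i. if i < m then g i else f ((i - m) mod n))"
    note L = lasso[OF g(3) fw gm fn f(1) t_def]
    have tr: "infinite_traj (TD Q) \<pi> t" unfolding infinite_traj_def using L g f by auto
    have S: "{s. \<exists>\<^sub>\<infinity>i. t i = s} = C" using L(3) f(5) fC by auto
    have "terminating_traj Q \<pi> t" using PT tr unfolding P_terminating_def by blast
    then obtain X s where "X \<in> qV Q" "\<exists>\<^sub>\<infinity>i. t i = s" "dec_at Q \<pi> s X"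
      "\<forall>s'. (\<exists>\<^sub>\<infinity>i. t i = s') \<longrightarrow> \<not> inc_at Q \<pi> s' X"
      unfolding terminating_traj_def by blast
    then show False using S cond by (metis mem_Collect_eq)
  qed
qed

lemma dir2:
  assumes wf: "qnp_wf Q" and SS: "sieve_succeeds Q \<pi>"
  shows "P_terminating Q \<pi>"
  unfolding P_terminating_def
proof (intro allI impI)
  fix t assume tr: "infinite_traj (TD Q) \<pi> t"
  show "terminating_traj Q \<pi> t"
  proof (rule ccontr)
    assume NT: "\<not> terminating_traj Q \<pi> t"
    have tn: "t i \<in> pg_nodes (TD Q) \<pi>" for i
    proof (induction i)
      case 0 then show ?case using tr unfolding infinite_traj_def pg_nodes_def by simp
    next
      case (Suc i) then show ?case using tr unfolding infinite_traj_def pg_nodes_def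
        by (auto intro: rtranclp.rtrancl_into_rtrancl)
    qed
    have "finite (range t)" using tn finite_nodes[OF wf] by (meson finite_subset image_subsetI)
    then obtain N where N: "\<forall>i>N. (\<exists>\<^sub>\<infinity>j. t j = t i \<and> t (Suc j) = t (Suc i))"
      using eventually_Einf by blast
    define Einf where "Einf = {(a, b). \<exists>\<^sub>\<infinity>j. t j = a \<and> t (Suc j) = b}"
    have conn: "(a, b) \<in> Einf\<^sup>*" if a: "\<exists>\<^sub>\<infinity>i. t i = a" and b: "\<exists>\<^sub>\<infinity>i. t i = b" for a b
    proof -
      obtain i where i: "i > N" "t i = a" using a unfolding INFM_nat by blast
      obtain j where j: "j > i" "t j = b" using b unfolding INFM_nat by blast
      have "(t i, t j) \<in> Einf\<^sup>*" by (rule seq_path) (use N i j in \<open>auto simp: Einf_def\<close>)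
      then show ?thesis using i j by simp
    qed
    have Einf_inf: "\<exists>\<^sub>\<infinity>i. t i = a" if "(a, b) \<in> Einf" for a b
      using that unfolding Einf_def by (auto elim: INFM_mono)
    have Einf_sub: "Einf \<subseteq> pg_edges (TD Q) \<pi>"
    proof
      fix e assume "e \<in> Einf"
      then obtain a b j where "e = (a,b)" "t j = a" "t (Suc j) = b" unfolding Einf_def by (auto elim: INFM_E)
      then show "e \<in> pg_edges (TD Q) \<pi>" using tn tr unfolding pg_edges_def infinite_traj_def by auto
    qed
    obtain E where E: "(\<lambda>A B. \<not> acyclic A \<and> sieve_step Q \<pi> A B)\<^sup>*\<^sup>* (pg_edges (TD Q) \<pi>) E"
       "acyclic E \<or> \<not> (\<exists>E''. sieve_step Q \<pi> E E'')"
      using sieve_exists[OF finite_edges[OF wf]] by blast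
    have acE: "acyclic E" using SS E unfolding sieve_succeeds_def sieve_result_def by blast
    have inv: "Einf \<subseteq> E"
      using E(1)
    proof (induction rule: rtranclp_induct)
      case base then show ?case using Einf_sub .
    next
      case (step A B)
      obtain C X where CX: "is_scc A C" "X \<in> qV Q" "\<forall>s\<in>C. \<not> inc_at Q \<pi> s X"
        "B = A - {(s, s'). s \<in> C \<and> s' \<in> C \<and> dec_at Q \<pi> s X}"
        using step(2) unfolding sieve_step_def by blast
      show ?case
      proof
        fix e assume eE: "e \<in> Einf"
        obtain s s' where e: "e = (s, s')" by (cases e)
        show "e \<in> B"
        proof (rule ccontr)
          assume "e \<notin> B"
          then have sC: "s \<in> C" "dec_at Q \<pi> s X" using CX(4) eE e step(3) by auto
          have sinf: "\<exists>\<^sub>\<infinity>i. t i = s" using Einf_inf eE e by blast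
          obtain s'' where s'': "\<exists>\<^sub>\<infinity>i. t i = s''" "inc_at Q \<pi> s'' X"
            using NT CX(2) sinf sC(2) unfolding terminating_traj_def by blast
          have "(s, s'') \<in> A\<^sup>*" "(s'', s) \<in> A\<^sup>*"
            using conn[OF sinf s''(1)] conn[OF s''(1) sinf] step(3) rtrancl_mono by blast+
          then have "s'' \<in> C" using scc_closed[OF CX(1) sC(1)] by blast
          then show False using CX(3) s''(2) by blast
        qed
      qed
    qed
    define a where "a = t (Suc N)"
    define b where "b = t (Suc (Suc N))"
    have ab: "(a, b) \<in> Einf" using N unfolding Einf_def a_def b_def by auto
    have bc: "(b, t (Suc (Suc (Suc N)))) \<in> Einf" using N unfolding Einf_def b_def by auto
    have "(b, a) \<in> Einf\<^sup>*" using conn Einf_inf[OF ab] Einf_inf[OF bc] by blast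
    then have "(a, a) \<in> Einf\<^sup>+" using ab by (meson rtrancl_into_trancl2)
    then have "(a, a) \<in> E\<^sup>+" using inv trancl_mono by blast
    then show False using acE unfolding acyclic_def by blast
  qed
qed

theorem theorem6:
  fixes Q :: "('f, 'v, 'a) qnp" and \<pi> :: "('f, 'v, 'a) policy"
  assumes "qnp_wf Q"
    and "is_policy (TD Q) \<pi>"
  shows "P_terminating Q \<pi> \<longleftrightarrow> sieve_succeeds Q \<pi>"
  using dir1[OF assms(1)] dir2[OF assms(1)] by blast

end
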